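(* Let $\mathcal A$ be an $\mathbf{HpsUL}^\ast_\omega$-chain. Let $B\subseteq A$ with $\{e,f,\bot,\top\}\subseteq B$, and let $M$, $D$, $\cdot^D$ be as described in the context. Then for all $X,Y\in D$, $$X\cdot^DY\subseteq (e] \iff (X\cdot^DY)\cdot^DY\subseteq (e],$$ where $(e]=\{c\in M: c\le e\}$.
   Context: An $\mathbf{HpsUL}$-algebra is a structure $\mathcal A=\langle A,\wedge,\vee,\cdot,\backslash,/,e,f,\bot,\top\rangle$ such that: - it is a bounded lattice; - $\langle A,\cdot,e\rangle$ is a monoid; - $xy\le z$ iff $x\le z/y$ iff $y\le x\backslash z$; - for all $x,y,u,v$: $\lambda_u((x\vee y)\backslash x)\vee\rho_v((x\vee y)\backslash y)=e$, where $\lambda_a(b)=(a\backslash(ba))\wedge e$ and $\rho_a(b)=((ab)/a)\wedge e$. An $\mathbf{HpsUL}^\ast_\omega$-chain is a linearly ordered $\mathbf{HpsUL}$-algebra such that $xy\le e$ implies $yx\le e$, and $x\backslash e=x^2\backslash e$ for all $x$. Construction. $M$ is the submonoid of $\langle A,\cdot,e\rangle$ generated by $B$. For $a_1,a_2\in M$ and $b\in B$, put $(a_1^la_2^r)^{-1}(b]=\{c\in M: a_1ca_2\le b\}$. Let $\bar D$ be the set of all such sets. Let $D=\{\bigcap\chi:\chi\subseteq\bar D\}$, with the empty intersection equal to $M$. For $X\subseteq M$, let $C(X)$ be the intersection of all members of $\bar D$ containing $X$. For $X,Y\subseteq M$, let $XY=\{xy:x\in X,y\in Y\}$ and $X\cdot^DY=C(XY)$.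 *)

theory Defs
  imports Main
begin

text \<open>An HpsUL-algebra whose lattice reduct is the bounded lattice on the type 'a
  (meet = inf, join = sup, bottom = bot, top = top); the remaining operations are
  multiplication mul, left residual ld (ld x z = x\z), right residual rd (rd z y = z/y),
  unit e and the constant f (no axioms on f).\<close>

definition lam_op :: "('a \<Rightarrow> 'a \<Rightarrow> 'a) \<Rightarrow> ('a \<Rightarrow> 'a \<Rightarrow> 'a) \<Rightarrow> 'a::lattice \<Rightarrow> 'a \<Rightarrow> 'a \<Rightarrow> 'a" where
  "lam_op mul ld e a b = inf (ld a (mul b a)) e"

definition rho_op :: "('a \<Rightarrow> 'a \<Rightarrow> 'a) \<Rightarrow> ('a \<Rightarrow> 'a \<Rightarrow> 'a) \<Rightarrow> 'a::lattice \<Rightarrow> 'a \<Rightarrow> 'a \<Rightarrow> 'a" where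
  "rho_op mul rd e a b = inf (rd (mul a b) a) e"

definition HpsUL ::
  "('a::bounded_lattice \<Rightarrow> 'a \<Rightarrow> 'a) \<Rightarrow> ('a \<Rightarrow> 'a \<Rightarrow> 'a) \<Rightarrow> ('a \<Rightarrow> 'a \<Rightarrow> 'a) \<Rightarrow> 'a \<Rightarrow> 'a \<Rightarrow> bool" where
  "HpsUL mul ld rd e f \<longleftrightarrow>
     (\<forall>x y z. mul (mul x y) z = mul x (mul y z)) \<and>
     (\<forall>x. mul e x = x \<and> mul x e = x) \<and>
     (\<forall>x y z. (mul x y \<le> z \<longleftrightarrow> x \<le> rd z y) \<and> (mul x y \<le> z \<longleftrightarrow> y \<le> ld x z)) \<and>
     (\<forall>x y u v. sup (lam_op mul ld e u (ld (sup x y) x))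
                     (rho_op mul rd e v (ld (sup x y) y)) = e)"

definition HpsUL_star_omega_chain ::
  "('a::bounded_lattice \<Rightarrow> 'a \<Rightarrow> 'a) \<Rightarrow> ('a \<Rightarrow> 'a \<Rightarrow> 'a) \<Rightarrow> ('a \<Rightarrow> 'a \<Rightarrow> 'a) \<Rightarrow> 'a \<Rightarrow> 'a \<Rightarrow> bool" where
  "HpsUL_star_omega_chain mul ld rd e f \<longleftrightarrow>
     HpsUL mul ld rd e f \<and>
     (\<forall>x y::'a. x \<le> y \<or> y \<le> x) \<and>
     (\<forall>x y. mul x y \<le> e \<longrightarrow> mul y x \<le> e) \<and>
     (\<forall>x. ld x e = ld (mul x x) e)"

inductive_set genM :: "('a \<Rightarrow> 'a \<Rightarrow> 'a) \<Rightarrow> 'a \<Rightarrow> 'a set \<Rightarrow> 'a set"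
  for mul :: "'a \<Rightarrow> 'a \<Rightarrow> 'a" and e :: 'a and B :: "'a set" where
  unit: "e \<in> genM mul e B"
| gen: "b \<in> B \<Longrightarrow> b \<in> genM mul e B"
| mult: "x \<in> genM mul e B \<Longrightarrow> y \<in> genM mul e B \<Longrightarrow> mul x y \<in> genM mul e B"

text \<open>(a1^l a2^r)^{-1}(b] = {c \<in> M. a1 c a2 \<le> b}\<close>
definition preimg :: "('a::order \<Rightarrow> 'a \<Rightarrow> 'a) \<Rightarrow> 'a set \<Rightarrow> 'a \<Rightarrow> 'a \<Rightarrow> 'a \<Rightarrow> 'a set" where
  "preimg mul M a1 a2 b = {c \<in> M. mul (mul a1 c) a2 \<le> b}"

definition Dbar :: "('a::order \<Rightarrow> 'a \<Rightarrow> 'a) \<Rightarrow> 'a \<Rightarrow> 'a set \<Rightarrow> 'a set set" where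
  "Dbar mul e B = {preimg mul (genM mul e B) a1 a2 b | a1 a2 b.
                     a1 \<in> genM mul e B \<and> a2 \<in> genM mul e B \<and> b \<in> B}"

text \<open>D: intersections of subfamilies of Dbar, the empty intersection being M.\<close>
definition Dsets :: "('a::order \<Rightarrow> 'a \<Rightarrow> 'a) \<Rightarrow> 'a \<Rightarrow> 'a set \<Rightarrow> 'a set set" where
  "Dsets mul e B = {genM mul e B \<inter> \<Inter>\<chi> | \<chi>. \<chi> \<subseteq> Dbar mul e B}"

text \<open>C(X): intersection of all members of Dbar containing X (empty intersection = M).\<close>
definition Cl :: "('a::order \<Rightarrow> 'a \<Rightarrow> 'a) \<Rightarrow> 'a \<Rightarrow> 'a set \<Rightarrow> 'a set \<Rightarrow> 'a set" where
  "Cl mul e B X = genM mul e B \<inter> \<Inter>{Z \<in> Dbar mul e B. X \<subseteq> Z}"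

definition setprod :: "('a \<Rightarrow> 'a \<Rightarrow> 'a) \<Rightarrow> 'a set \<Rightarrow> 'a set \<Rightarrow> 'a set" where
  "setprod mul X Y = {mul x y | x y. x \<in> X \<and> y \<in> Y}"

definition Dmul :: "('a::order \<Rightarrow> 'a \<Rightarrow> 'a) \<Rightarrow> 'a \<Rightarrow> 'a set \<Rightarrow> 'a set \<Rightarrow> 'a set \<Rightarrow> 'a set" where
  "Dmul mul e B X Y = Cl mul e B (setprod mul X Y)"

definition downM :: "('a::order \<Rightarrow> 'a \<Rightarrow> 'a) \<Rightarrow> 'a \<Rightarrow> 'a set \<Rightarrow> 'a \<Rightarrow> 'a set" where
  "downM mul e B a = {c \<in> genM mul e B. c \<le> a}"

end

theory Submission
  imports Defs
begin

theorem lemma3p7: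
  fixes mul ld rd :: "'a::bounded_lattice \<Rightarrow> 'a \<Rightarrow> 'a" and e f :: 'a and B :: "'a set"
  assumes "HpsUL_star_omega_chain mul ld rd e f"
    and "{e, f, bot, top} \<subseteq> B"
    and "X \<in> Dsets mul e B" and "Y \<in> Dsets mul e B"
  shows "Dmul mul e B X Y \<subseteq> downM mul e B e \<longleftrightarrow>
         Dmul mul e B (Dmul mul e B X Y) Y \<subseteq> downM mul e B e"
proof -
  define M where "M = genM mul e B"
  have ch: "HpsUL mul ld rd e f" "\<forall>x y::'a. x \<le> y \<or> y \<le> x"
    "\<forall>x y. mul x y \<le> e \<longrightarrow> mul y x \<le> e" "\<forall>x. ld x e = ld (mul x x) e"
    using assms(1) unfolding HpsUL_star_omega_chain_def by auto
  have assoc: "\<And>x y z. mul (mul x y) z = mul x (mul y z)"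
    and res1: "\<And>x y z. mul x y \<le> z \<longleftrightarrow> x \<le> rd z y"
    and res2: "\<And>x y z. mul x y \<le> z \<longleftrightarrow> y \<le> ld x z"
    using ch(1) unfolding HpsUL_def by blast+
  have unitl: "\<And>x. mul e x = x" using ch(1) unfolding HpsUL_def by blast
  have comm: "\<And>x y. mul x y \<le> e \<Longrightarrow> mul y x \<le> e" using ch(3) by auto
  have sq: "\<And>x. ld x e = ld (mul x x) e" using ch(4) by auto
  have monoR: "\<And>a b c. a \<le> b \<Longrightarrow> mul c a \<le> mul c b"
  proof -
    fix a b c :: 'a assume "a \<le> b"
    have "b \<le> ld c (mul c b)" using res2 by blast
    then show "mul c a \<le> mul c b" using \<open>a \<le> b\<close> res2 order_trans by blast
  qed
  have monoL: "\<And>a b c. a \<le> b \<Longrightarrow> mul a c \<le> mul b c"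
  proof -
    fix a b c :: 'a assume "a \<le> b"
    have "b \<le> rd (mul b c) c" using res1 by blast
    then show "mul a c \<le> mul b c" using \<open>a \<le> b\<close> res1 order_trans by blast
  qed
  have eM: "e \<in> M" unfolding M_def by (rule genM.unit)
  have eB: "e \<in> B" using assms(2) by auto
  have XM: "X \<subseteq> M" using assms(3) unfolding Dsets_def M_def by auto
  have YM: "Y \<subseteq> M" using assms(4) unfolding Dsets_def M_def by auto
  have downD: "downM mul e B e \<in> Dbar mul e B"
  proof -
    have "downM mul e B e = preimg mul M e e e"
      unfolding downM_def preimg_def M_def using ch(1) unfolding HpsUL_def by simp
    then show ?thesis unfolding Dbar_def M_def using eM eB M_def by blast
  qed
  have ClM: "\<And>Z. Cl mul e B Z \<subseteq> M" unfolding Cl_def M_def by auto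
  have ClSup: "\<And>Z. Z \<subseteq> M \<Longrightarrow> Z \<subseteq> Cl mul e B Z" unfolding Cl_def M_def by auto
  have ClD: "\<And>Z P. P \<in> Dbar mul e B \<Longrightarrow> Z \<subseteq> P \<Longrightarrow> Cl mul e B Z \<subseteq> P"
    unfolding Cl_def by auto
  have XYM: "setprod mul X Y \<subseteq> M"
    using XM YM unfolding setprod_def M_def by (auto intro: genM.mult)
  show ?thesis
  proof
    assume h: "Dmul mul e B X Y \<subseteq> downM mul e B e"
    have xy: "\<And>x y. x \<in> X \<Longrightarrow> y \<in> Y \<Longrightarrow> mul x y \<le> e"
    proof -
      fix x y assume "x \<in> X" "y \<in> Y"
      then have "mul x y \<in> setprod mul X Y" unfolding setprod_def by auto
      then have "mul x y \<in> Dmul mul e B X Y" using ClSup[OF XYM] unfolding Dmul_def by auto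
      then show "mul x y \<le> e" using h unfolding downM_def by auto
    qed
    show "Dmul mul e B (Dmul mul e B X Y) Y \<subseteq> downM mul e B e"
      unfolding Dmul_def[of _ _ _ "Cl mul e B (setprod mul X Y)"] Dmul_def[of _ _ _ X]
    proof (rule ClD[OF downD])
      show "setprod mul (Cl mul e B (setprod mul X Y)) Y \<subseteq> downM mul e B e"
      proof
        fix w assume "w \<in> setprod mul (Cl mul e B (setprod mul X Y)) Y"
        then obtain z y where w: "w = mul z y" and z: "z \<in> Cl mul e B (setprod mul X Y)"
          and y: "y \<in> Y" unfolding setprod_def by auto
        have yM: "y \<in> M" using y YM by auto
        define P where "P = preimg mul M e y e"
        have PD: "P \<in> Dbar mul e B" unfolding P_def Dbar_def M_def
          using eM yM eB M_def by blast
        have "setprod mul X Y \<subseteq> P"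
        proof
          fix u assume "u \<in> setprod mul X Y"
          then obtain x y' where u: "u = mul x y'" and x: "x \<in> X" and y': "y' \<in> Y"
            unfolding setprod_def by auto
          define m where "m = (if y \<le> y' then y' else y)"
          have mY: "m \<in> Y" using y y' m_def by auto
          have ym: "y \<le> m" "y' \<le> m" using ch(2) m_def by auto
          have "mul x m \<le> e" using xy x mY by auto
          then have "mul m x \<le> e" by (rule comm)
          then have "x \<le> ld m e" using res2 by blast
          then have "x \<le> ld (mul m m) e" using sq by simp
          then have "mul (mul m m) x \<le> e" using res2 by blast
          then have "mul x (mul m m) \<le> e" by (rule comm)
          moreover have "mul x (mul y' y) \<le> mul x (mul m m)"
            using monoR monoL ym order_trans by metis
          ultimately have "mul (mul x y') y \<le> e" using assoc order_trans by metis
          moreover have "u \<in> M" using u XYM \<open>u \<in> setprod mul X Y\<close> by auto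
          ultimately show "u \<in> P" unfolding P_def preimg_def u
            using unitl by simp
        qed
        then have "z \<in> P" using ClD[OF PD] z by auto
        then have "mul z y \<le> e" unfolding P_def preimg_def
          using unitl by simp
        moreover have "w \<in> M" using w z y ClM YM unfolding M_def by (auto intro: genM.mult)
        ultimately show "w \<in> downM mul e B e" unfolding downM_def M_def w by auto
      qed
    qed
  next
    assume h: "Dmul mul e B (Dmul mul e B X Y) Y \<subseteq> downM mul e B e"
    show "Dmul mul e B X Y \<subseteq> downM mul e B e" unfolding Dmul_def[of _ _ _ X]
    proof (rule ClD[OF downD])
      show "setprod mul X Y \<subseteq> downM mul e B e"
      proof
        fix u assume uin: "u \<in> setprod mul X Y"
        then obtain x y where u: "u = mul x y" and x: "x \<in> X" and y: "y \<in> Y"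
          unfolding setprod_def by auto
        have "u \<in> Dmul mul e B X Y" using ClSup[OF XYM] uin unfolding Dmul_def by auto
        then have "mul u y \<in> setprod mul (Dmul mul e B X Y) Y" using y unfolding setprod_def by auto
        moreover have "setprod mul (Dmul mul e B X Y) Y \<subseteq> M"
          using ClM YM unfolding setprod_def Dmul_def M_def by (auto intro: genM.mult)
        ultimately have "mul u y \<in> Dmul mul e B (Dmul mul e B X Y) Y"
          using ClSup unfolding Dmul_def[of _ _ _ "Dmul mul e B X Y"] by blast
        then have "mul (mul x y) y \<le> e" using h u unfolding downM_def by auto
        then have "mul y (mul x y) \<le> e" by (rule comm)
        then have "mul (mul y x) y \<le> e" using assoc by simp
        then have "mul y (mul y x) \<le> e" by (rule comm)
        then have "mul (mul y y) x \<le> e" using assoc by simp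
        then have "x \<le> ld (mul y y) e" using res2 by blast
        then have "x \<le> ld y e" using sq by simp
        then have "mul y x \<le> e" using res2 by blast
        then have "mul x y \<le> e" by (rule comm)
        then show "u \<in> downM mul e B e" using uin XYM u unfolding downM_def M_def by auto
      qed
    qed
  qed
qed

end
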